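(* Let $k\ge 4$, $s\ge 1$, $p\ge 0$ be integers and let $k>u_1>u_2>\cdots>u_p\ge 3$ be integers such that $\sum_{i=1}^{\min\{s+1,p\}}u_i\le sk$. Then there exists a binary self-orthogonal Griesmer code with parameters $$\Big[s(2^k-1)-\sum_{i=1}^p(2^{u_i}-1),\ k,\ s2^{k-1}-\sum_{i=1}^p2^{u_i-1}\Big].$$
   Context: A binary code $C$ is self-orthogonal if $C\subseteq C^\perp$. A binary linear $[n,k,d]$ code is a Griesmer code if $n=\sum_{i=0}^{k-1}\lceil d/2^i\rceil$. *)

theory Defs
  imports Complex_Main
begin

text \<open>Binary vectors of length n are boolean lists of length n (True = 1, False = 0).
  Addition over GF(2) is componentwise exclusive or.\<close>

definition bin_add :: "bool list \<Rightarrow> bool list \<Rightarrow> bool list" where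
  "bin_add x y = map2 (\<noteq>) x y"

definition zero_vec :: "nat \<Rightarrow> bool list" where
  "zero_vec n = replicate n False"

text \<open>A binary linear code of length n: a GF(2)-subspace of GF(2)^n
  (over GF(2), closure under addition plus containing 0 is exactly being a subspace).\<close>
definition bin_linear_code :: "nat \<Rightarrow> bool list set \<Rightarrow> bool" where
  "bin_linear_code n C \<longleftrightarrow>
     C \<subseteq> {v. length v = n} \<and> zero_vec n \<in> C \<and> (\<forall>x\<in>C. \<forall>y\<in>C. bin_add x y \<in> C)"

definition code_dim :: "bool list set \<Rightarrow> nat \<Rightarrow> bool" where
  "code_dim C k \<longleftrightarrow> card C = 2 ^ k"

definition hweight :: "bool list \<Rightarrow> nat" where
  "hweight v = length (filter id v)"

text \<open>Minimum distance of a linear code = minimum Hamming weight of a nonzero codeword.\<close>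
definition min_dist :: "nat \<Rightarrow> bool list set \<Rightarrow> nat" where
  "min_dist n C = Min {hweight c | c. c \<in> C \<and> c \<noteq> zero_vec n}"

definition bin_inner :: "nat \<Rightarrow> bool list \<Rightarrow> bool list \<Rightarrow> bool" where
  "bin_inner n x y \<longleftrightarrow> odd (card {i. i < n \<and> x ! i \<and> y ! i})"

definition dual_code :: "nat \<Rightarrow> bool list set \<Rightarrow> bool list set" where
  "dual_code n C = {v. length v = n \<and> (\<forall>c\<in>C. \<not> bin_inner n v c)}"

definition self_orthogonal :: "nat \<Rightarrow> bool list set \<Rightarrow> bool" where
  "self_orthogonal n C \<longleftrightarrow> C \<subseteq> dual_code n C"

definition griesmer_params :: "nat \<Rightarrow> nat \<Rightarrow> nat \<Rightarrow> bool" where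
  "griesmer_params n k d \<longleftrightarrow> int n = (\<Sum>i<k. \<lceil>real d / 2 ^ i\<rceil>)"

definition bin_code_params :: "bool list set \<Rightarrow> nat \<Rightarrow> nat \<Rightarrow> nat \<Rightarrow> bool" where
  "bin_code_params C n k d \<longleftrightarrow> bin_linear_code n C \<and> code_dim C k \<and> min_dist n C = d"

end

theory Submission
  imports Defs "Berlekamp_Zassenhaus.Distinct_Degree_Factorization"
begin

type_synonym gf = "bool mod_ring"
lemma gf_UNIV: "(UNIV::gf set) = {0,1}"
proof -
  have "card (UNIV::gf set) = 2" by simp
  moreover have "card ({0,1}::gf set) = 2" by simp
  ultimately show ?thesis by (metis card_subset_eq finite subset_UNIV)
qed
lemma gf_cases: "(x::gf) = 0 \<or> x = 1" using gf_UNIV by auto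
lemma gf_two: "(1::gf) + 1 = 0"
proof -
  have "(1::gf) + 1 \<noteq> 1"
  proof
    assume "(1::gf) + 1 = 1" 
    hence "(1::gf) + 1 = 1 + 0" by simp
    hence "(1::gf) = 0" using add_left_cancel by blast
    thus False by simp
  qed
  thus ?thesis using gf_cases[of "1+1"] by blast
qed
lemma gf_two': "(2::gf) = 0" using gf_two by (metis one_add_one)
lemma gf_add_self: "(x::gf) + x = 0" using gf_cases[of x] gf_two by auto
lemma gfp_add_self: "(x::gf poly) + x = 0"
  by (rule poly_eqI) (simp only: coeff_add gf_add_self coeff_0)
lemma gfp_minus: "- (x::gf poly) = x"
  by (metis add.inverse_unique gfp_add_self)
lemma gfp_diff: "(x::gf poly) - y = x + y"
  by (metis diff_conv_add_uminus gfp_minus)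

lemma gf_of_nat_pow2: "n \<ge> 1 \<Longrightarrow> (of_nat (2^n) :: gf) = 0"
  by (cases n) (simp_all add: gf_two')

lemma sum_pow2_lt: "(\<Sum>d<n. (2::nat)^d) < 2^n"
  by (induct n) auto

lemma degree_XX:
  assumes "m > 1"
  shows "degree (monom (1::gf) 1 ^ m - monom 1 1) = m"
proof -
  have "monom (1::gf) 1 ^ m - monom 1 1 = monom 1 m + monom 1 1"
    unfolding x_pow_n gfp_diff ..
  also have "degree \<dots> = m"
    using assms by (subst degree_add_eq_left) (simp_all add: degree_monom_eq)
  finally show ?thesis .
qed

lemma exists_irr:
  assumes n: "n \<ge> 1"
  shows "\<exists>f::gf poly. irreducible f \<and> degree f = n"
proof (rule ccontr)
  assume no: "\<not> ?thesis"
  define X where "X = (monom (1::gf) 1)"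
  define F where "F = X ^ (2^n) - X"
  define G where "G = (\<Prod>d\<in>{1..<n}. X ^ (2^d) - X)"
  have cardb: "CARD(bool) = 2" by simp
  have two_gt: "d \<ge> 1 \<Longrightarrow> (2::nat)^d > 1" for d
    by (metis One_nat_def less_exp order_le_less_trans numeral_2_eq_2 le_less_trans one_less_numeral_iff semiring_norm(76) less_2_cases_iff not_less) 
  have degF: "degree F = 2^n" unfolding F_def X_def using degree_XX[OF two_gt[OF n]] .
  hence F0: "F \<noteq> 0" by (metis degree_0 power_not_zero zero_neq_numeral)
  have fac0: "d \<in> {1..<n} \<Longrightarrow> X ^ (2^d) - X \<noteq> 0" for d
    using degree_XX[OF two_gt[of d]] unfolding X_def by (metis atLeastLessThan_iff degree_0 power_not_zero zero_neq_numeral)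
  have G0: "G \<noteq> 0" unfolding G_def using fac0 by (simp add: prod_zero_iff)
  have "degree G = (\<Sum>d\<in>{1..<n}. degree (X ^ (2^d) - X))"
    unfolding G_def by (rule degree_prod_eq_sum_degree) (use fac0 in auto)
  also have "\<dots> = (\<Sum>d\<in>{1..<n}. 2^d)"
    by (rule sum.cong[OF refl]) (metis X_def atLeastLessThan_iff degree_XX two_gt)
  also have "\<dots> \<le> (\<Sum>d<n. 2^d)" by (rule sum_mono2) auto
  finally have degG: "degree G < 2^n" using sum_pow2_lt[of n] by linarith
  have pX: "pderiv (X ^ (2^n)) = 0"
    unfolding X_def x_pow_n pderiv_monom using gf_of_nat_pow2[OF n] by simp
  have pderF: "pderiv F = -1"
    unfolding F_def using pX by (simp add: pderiv_diff X_def pderiv_monom)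
  have sq: "\<not> p * p dvd F" if "prime p" for p
  proof
    assume "p * p dvd F"
    then obtain h where h: "F = p * p * h" by (erule dvdE)
    have "pderiv F = p * (pderiv p * h + pderiv p * h + p * pderiv h)"
      unfolding h by (simp add: pderiv_mult algebra_simps)
    hence "p dvd 1" using pderF by (metis dvd_minus_iff dvdI)
    thus False using that not_prime_unit by blast
  qed
  have divG: "p dvd G" if p: "prime p" "p dvd F" for p
  proof -
    have irr: "irreducible p" using p(1) by (metis prime_elem_imp_irreducible prime_imp_prime_elem)
    have p0: "p \<noteq> 0" using p(1) by auto
    have "\<not> is_unit p" using p(1) not_prime_unit by blast
    hence d1: "degree p \<ge> 1" using is_unit_iff_degree[OF p0] by auto
    have "degree p \<noteq> n" using no irr by auto
    moreover have "\<not> degree p > n"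
    proof
      assume "degree p > n"
      from degree_divisor2[OF irr refl n this] p(2) show False
        unfolding F_def X_def cardb by simp
    qed
    ultimately have dn: "degree p < n" by auto
    have "p dvd X ^ (2^degree p) - X"
      using degree_divisor1[OF irr refl] unfolding X_def cardb .
    also have "\<dots> dvd G" unfolding G_def by (rule dvd_prodI) (use d1 dn in auto)
    finally show ?thesis .
  qed
  have "F dvd G"
  proof (rule multiplicity_le_imp_dvd[OF F0])
    fix p :: "gf poly" assume p: "prime p"
    show "multiplicity p F \<le> multiplicity p G"
    proof (cases "p dvd F")
      case False thus ?thesis by (simp add: not_dvd_imp_multiplicity_0)
    next
      case True
      have "multiplicity p F \<le> 1"
      proof (rule ccontr)
        assume "\<not> ?thesis"
        hence "p ^ 2 dvd p ^ multiplicity p F" by (intro le_imp_power_dvd) auto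
        hence "p ^ 2 dvd F" using multiplicity_dvd dvd_trans by blast
        thus False using sq[OF p] by (simp add: power2_eq_square)
      qed
      moreover have "multiplicity p G > 0"
        using prime_multiplicity_gt_zero_iff[of p G] p G0 divG[OF p True] by auto
      ultimately show ?thesis by linarith
    qed
  qed
  hence "degree F \<le> degree G" using G0 by (rule dvd_imp_degree_le)
  thus False using degF degG by linarith
qed

lemma card_deg_lt: "m \<ge> 1 \<Longrightarrow> card {f::gf poly. degree f < m} = 2^m"
proof -
  assume "m \<ge> 1"
  then obtain f :: "gf poly" where f: "irreducible f" "degree f = m" using exists_irr by blast
  interpret poly_mod_type_irr "CARD(bool)" f by (unfold_locales, auto simp add: f)
  show ?thesis using card_carrier_irr f unfolding carrier_irr_def by simp
qed

lemma finite_deg_lt: "finite {f::gf poly. degree f < m}"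
proof (cases "m \<ge> 1")
  case True thus ?thesis using card_deg_lt[OF True] by (metis card.infinite power_not_zero zero_neq_numeral)
next
  case False thus ?thesis by simp
qed

lemma gf_sum_ne0: "((z::gf) + w \<noteq> 0) \<longleftrightarrow> ((z \<noteq> 0) \<noteq> (w \<noteq> 0))"
  using gf_cases[of z] gf_cases[of w] gf_two by auto

lemma coprime_irr:
  fixes f h :: "gf poly"
  assumes "irreducible f" "irreducible h" "degree f \<noteq> degree h"
  shows "Rings.coprime f h"
  using coprime_iff_coprime by (smt (verit, best) assms(1,2,3) ddvd_trans
    idom_class.irreducible_altdef nat_neq_iff not_coprime_iff_common_factor
    poly_divides_conv0)


lemma sum_coeff_monom: "(\<Sum>j<k. coeff (monom (1::gf) m) j * coeff x j) = (if m < k then coeff x m else 0)"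
  by (simp add: coeff_monom if_distrib[of "\<lambda>z. z * _"] sum.delta cong: if_cong)

lemma sum_coeff_monom': "(\<Sum>j<k. coeff x j * coeff (monom (1::gf) m) j) = (if m < k then coeff x m else 0)"
  using sum_coeff_monom[where k=k and m=m and x=x] by (simp add: mult.commute)

locale constr =
  fixes k s p :: nat and u :: "nat \<Rightarrow> nat" and g :: "nat \<Rightarrow> gf poly"
  assumes k4: "k \<ge> 4" and s1: "s \<ge> 1"
    and ubd: "\<And>i. i \<in> {1..p} \<Longrightarrow> 3 \<le> u i \<and> u i < k"
    and udec: "\<And>i. i \<in> {1..<p} \<Longrightarrow> u i > u (i+1)"
    and usum: "(\<Sum>i = 1..min (s + 1) p. u i) \<le> s * k"
    and girr: "\<And>i. i \<in> {1..p} \<Longrightarrow> irreducible (g i)"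
    and gdeg: "\<And>i. i \<in> {1..p} \<Longrightarrow> degree (g i) = k - u i"
begin

lemma u_mono: "1 \<le> i \<Longrightarrow> i \<le> j \<Longrightarrow> j \<le> p \<Longrightarrow> u j \<le> u i"
proof (induct j)
  case (Suc j)
  show ?case
  proof (cases "i = Suc j")
    case False
    hence "i \<le> j" using Suc by auto
    hence "u j \<le> u i" using Suc by auto
    moreover have "u (j+1) < u j" using udec[of j] Suc \<open>i \<le> j\<close> by auto
    ultimately show ?thesis by simp
  qed simp
qed simp

lemma u_strict: "1 \<le> i \<Longrightarrow> i < j \<Longrightarrow> j \<le> p \<Longrightarrow> u j < u i"
  using u_mono[of "i+1" j] udec[of i] by auto

lemma u_inj: "inj_on u {1..p}"
  by (rule inj_onI) (metis atLeastAtMost_iff nat_neq_iff u_strict less_irrefl)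

lemma sum_sub: "S \<subseteq> {1..p} \<Longrightarrow> (\<Sum>i\<in>S. u i) \<le> (\<Sum>i=1..card S. u i)"
proof (induct "card S" arbitrary: S)
  case 0
  hence "finite S" using finite_subset by blast
  with 0 have "S = {}" by simp
  thus ?case by simp
next
  case (Suc m S)
  have fin: "finite S" using Suc.prems finite_subset by blast
  hence ne: "S \<noteq> {}" using Suc.hyps(2) by auto
  define j where "j = Max S"
  have jS: "j \<in> S" using fin ne j_def by simp
  have "S \<subseteq> {1..j}" using Suc.prems fin j_def by auto
  hence "card S \<le> j" using card_mono[of "{1..j}" S] by simp
  hence jge: "Suc m \<le> j" using Suc.hyps by simp
  have jp: "j \<le> p" using jS Suc.prems by auto
  have cS': "m = card (S - {j})" using Suc.hyps(2) jS fin by simp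
  have IH: "(\<Sum>i\<in>S - {j}. u i) \<le> (\<Sum>i=1..m. u i)"
    using Suc.hyps(1)[OF cS'] Suc.prems cS' by auto
  have "(\<Sum>i\<in>S. u i) = u j + (\<Sum>i\<in>S - {j}. u i)" using sum.remove[OF fin jS] .
  also have "\<dots> \<le> u (Suc m) + (\<Sum>i=1..m. u i)"
    using IH u_mono[of "Suc m" j] jge jp by auto
  also have "\<dots> = (\<Sum>i=1..Suc m. u i)" by simp
  finally show ?case using Suc.hyps(2) by simp
qed

definition V where "V = {x::gf poly. degree x < k}"
definition U where "U i = (\<lambda>f. f * g i) ` {f. degree f < u i}"
definition cnt where "cnt x = card {i\<in>{1..p}. x \<in> U i}"
definition Vs where "Vs = V - {0}"
definition xs where "xs = (SOME l. set l = Vs \<and> distinct l)"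
definition cols where "cols = concat (map (\<lambda>x. replicate (s - cnt x) x) xs)"
definition ip :: "gf poly \<Rightarrow> gf poly \<Rightarrow> bool" where "ip a x = ((\<Sum>j<k. coeff a j * coeff x j) \<noteq> 0)"
definition cw where "cw a = map (ip a) cols"

lemma finite_V: "finite V" unfolding V_def by (rule finite_deg_lt)
lemma card_V: "card V = 2^k" unfolding V_def using k4 by (intro card_deg_lt) auto
lemma V_add: "x \<in> V \<Longrightarrow> y \<in> V \<Longrightarrow> x + y \<in> V" unfolding V_def by (auto intro: degree_add_less)
lemma V_zero: "0 \<in> V" unfolding V_def using k4 by auto

lemma g_nz: "i \<in> {1..p} \<Longrightarrow> g i \<noteq> 0"
proof -
  assume i: "i \<in> {1..p}"
  have "degree (g i) > 0" using gdeg[OF i] ubd[OF i] by simp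
  thus ?thesis by auto
qed

lemma U_sub: "i \<in> {1..p} \<Longrightarrow> U i \<subseteq> V"
proof
  fix x assume i: "i \<in> {1..p}" and "x \<in> U i"
  then obtain f where f: "degree f < u i" "x = f * g i" unfolding U_def by auto
  show "x \<in> V"
  proof (cases "f = 0")
    case True thus ?thesis using f V_zero by simp
  next
    case False
    hence "degree x = degree f + degree (g i)" using f g_nz[OF i] by (simp add: degree_mult_eq)
    moreover have "degree f + (k - u i) < k" using f(1) ubd[OF i] by linarith
    ultimately show ?thesis using gdeg[OF i] unfolding V_def by simp
  qed
qed

lemma U_add: "x \<in> U i \<Longrightarrow> y \<in> U i \<Longrightarrow> x + y \<in> U i"
proof -
  assume "x \<in> U i" "y \<in> U i"
  then obtain f h where fh: "degree f < u i" "x = f * g i" "degree h < u i" "y = h * g i" unfolding U_def by auto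
  have "x + y = (f + h) * g i" using fh by (simp add: algebra_simps)
  moreover have "degree (f + h) < u i" using fh by (intro degree_add_less)
  ultimately show ?thesis unfolding U_def by blast
qed

lemma U_zero: "i \<in> {1..p} \<Longrightarrow> 0 \<in> U i" unfolding U_def using ubd[of i] by (auto intro!: image_eqI[of _ _ 0])

lemma U_dvd: "x \<in> U i \<Longrightarrow> g i dvd x" unfolding U_def by auto

lemma finite_U: "finite (U i)" unfolding U_def by (intro finite_imageI finite_deg_lt)

lemma card_U: "i \<in> {1..p} \<Longrightarrow> card (U i) = 2^(u i)"
proof -
  assume i: "i \<in> {1..p}"
  have "inj_on (\<lambda>f. f * g i) {f. degree f < u i}"
    using g_nz[OF i] by (auto intro: inj_onI)
  hence "card (U i) = card {f::gf poly. degree f < u i}" unfolding U_def by (rule card_image)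
  also have "\<dots> = 2^(u i)" using ubd[OF i] card_deg_lt[of "u i"] by auto
  finally show ?thesis .
qed

end


lemma prod_coprime_dvd:
  fixes f :: "nat \<Rightarrow> gf poly"
  assumes "finite S" "\<And>i. i \<in> S \<Longrightarrow> f i dvd x"
    and "\<And>i j. i \<in> S \<Longrightarrow> j \<in> S \<Longrightarrow> i \<noteq> j \<Longrightarrow> Rings.coprime (f i) (f j)"
  shows "prod f S dvd x"
  using assms
proof (induct S rule: finite_induct)
  case (insert i S)
  have "Rings.coprime (f i) (prod f S)"
    using insert by (intro prod_coprime_right) blast
  moreover have "prod f S dvd x" using insert by auto
  moreover have "f i dvd x" using insert by auto
  ultimately show ?case using insert by (simp add: divides_mult)
qed simp

context constr begin

lemma g_coprime: "i \<in> {1..p} \<Longrightarrow> j \<in> {1..p} \<Longrightarrow> i \<noteq> j \<Longrightarrow> Rings.coprime (g i) (g j)"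
proof -
  assume i: "i \<in> {1..p}" and j: "j \<in> {1..p}" and ij: "i \<noteq> j"
  have "u i \<noteq> u j" using u_inj i j ij by (meson inj_onD)
  hence "degree (g i) \<noteq> degree (g j)" using gdeg[OF i] gdeg[OF j] ubd[OF i] ubd[OF j] by auto
  thus ?thesis using coprime_irr girr[OF i] girr[OF j] by blast
qed

lemma cnt_le: assumes x: "x \<in> V" "x \<noteq> 0" shows "cnt x \<le> s"
proof (rule ccontr)
  define S where "S = {i\<in>{1..p}. x \<in> U i}"
  assume "\<not> cnt x \<le> s"
  hence "s + 1 \<le> card S" unfolding cnt_def S_def by simp
  then obtain S' where S': "S' \<subseteq> S" "card S' = s + 1" by (meson obtain_subset_with_card_n)
  have S'p: "S' \<subseteq> {1..p}" using S' S_def by auto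
  have finS': "finite S'" using S'p finite_subset by blast
  have "s + 1 \<le> p" using card_mono[OF _ S'p] S' by simp
  hence mn: "min (s+1) p = s + 1" by simp
  have "(\<Sum>i\<in>S'. u i) \<le> (\<Sum>i=1..s+1. u i)" using sum_sub[OF S'p] S' by simp
  hence su: "(\<Sum>i\<in>S'. u i) \<le> s * k" using usum mn by simp
  have "prod g S' dvd x"
  proof (rule prod_coprime_dvd[OF finS'])
    fix i assume "i \<in> S'" thus "g i dvd x" using S' S_def U_dvd by auto
  next
    fix i j assume "i \<in> S'" "j \<in> S'" "i \<noteq> j" thus "Rings.coprime (g i) (g j)" using g_coprime S'p by blast
  qed
  hence "degree (prod g S') \<le> degree x" using x(2) by (rule dvd_imp_degree_le)
  also have "\<dots> < k" using x(1) unfolding V_def by simp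
  finally have lt: "degree (prod g S') < k" .
  have "degree (prod g S') = (\<Sum>i\<in>S'. degree (g i))"
    by (rule degree_prod_eq_sum_degree) (use g_nz S'p in auto)
  also have "\<dots> = (\<Sum>i\<in>S'. k - u i)" using gdeg S'p by (intro sum.cong) auto
  finally have "(\<Sum>i\<in>S'. k - u i) < k" using lt by simp
  moreover have "(\<Sum>i\<in>S'. k - u i) + (\<Sum>i\<in>S'. u i) = (s+1) * k"
  proof -
    have "(\<Sum>i\<in>S'. k - u i) + (\<Sum>i\<in>S'. u i) = (\<Sum>i\<in>S'. k - u i + u i)" by (simp add: sum.distrib)
    also have "\<dots> = (\<Sum>i\<in>S'. k)"
    proof (rule sum.cong[OF refl])
      fix i assume "i \<in> S'" hence "u i < k" using ubd S'p by auto
      thus "k - u i + u i = k" by simp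
    qed
    finally show ?thesis using S' by simp
  qed
  ultimately show False using su by (simp add: algebra_simps)
qed

lemma ip_add: "ip a (x + y) = (ip a x \<noteq> ip a y)"
proof -
  have "(\<Sum>j<k. coeff a j * coeff (x + y) j) = (\<Sum>j<k. coeff a j * coeff x j) + (\<Sum>j<k. coeff a j * coeff y j)"
    by (simp add: algebra_simps sum.distrib)
  thus ?thesis unfolding ip_def using gf_sum_ne0 by simp
qed

lemma ip_add_left: "ip (a + b) x = (ip a x \<noteq> ip b x)"
proof -
  have "(\<Sum>j<k. coeff (a + b) j * coeff x j) = (\<Sum>j<k. coeff a j * coeff x j) + (\<Sum>j<k. coeff b j * coeff x j)"
    by (simp add: algebra_simps sum.distrib)
  thus ?thesis unfolding ip_def using gf_sum_ne0 by simp
qed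

lemma ip_zero[simp]: "\<not> ip a 0" "\<not> ip 0 x" unfolding ip_def by auto

lemma half:
  assumes fin: "finite W" and cl: "\<And>x y. x \<in> W \<Longrightarrow> y \<in> W \<Longrightarrow> x + y \<in> W"
    and x0: "x0 \<in> W" "ip a x0"
  shows "2 * card {x\<in>W. ip a x} = card W"
proof -
  define A where "A = {x\<in>W. ip a x}"
  define B where "B = {x\<in>W. \<not> ip a x}"
  have inv: "x + x0 + x0 = x" for x :: "gf poly" by (simp add: add.assoc gfp_add_self)
  have inj: "inj_on (\<lambda>x. x + x0) X" for X by (rule inj_onI) (metis inv)
  have "card A \<le> card B"
    by (rule card_inj_on_le[OF inj]) (use fin cl x0 ip_add in \<open>auto simp: A_def B_def\<close>)
  moreover have "card B \<le> card A"
    by (rule card_inj_on_le[OF inj]) (use fin cl x0 ip_add in \<open>auto simp: A_def B_def\<close>)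
  moreover have "card W = card A + card B"
  proof -
    have "W = A \<union> B" "A \<inter> B = {}" unfolding A_def B_def by auto
    thus ?thesis using fin by (simp add: card_Un_disjoint)
  qed
  ultimately show ?thesis unfolding A_def by simp
qed

lemma ip_monom_V: "a \<in> V \<Longrightarrow> a \<noteq> 0 \<Longrightarrow> ip a (monom 1 (degree a))"
  unfolding ip_def V_def using sum_coeff_monom'[where k=k and m="degree a" and x=a] by simp

lemma monom_V: "m < k \<Longrightarrow> monom 1 m \<in> V" unfolding V_def by (simp add: degree_monom_eq)

lemma card_ipV: assumes "a \<in> V" "a \<noteq> 0" shows "card {x\<in>V. ip a x} = 2^(k-1)"
proof -
  have "degree a < k" using assms V_def by simp
  hence "2 * card {x\<in>V. ip a x} = card V"
    using half[OF finite_V V_add monom_V ip_monom_V[OF assms]] by simp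
  hence "2 * card {x\<in>V. ip a x} = 2 * 2^(k-1)" using card_V k4
    by (metis Suc_diff_1 less_le_trans numeral_2_eq_2 power_Suc zero_less_numeral pos2 le_trans zero_less_one_class.zero_le_one)
  thus ?thesis by simp
qed

lemma card_ipU: assumes i: "i \<in> {1..p}"
  shows "card {x\<in>U i. ip a x} = (if \<exists>x\<in>U i. ip a x then 2^(u i - 1) else 0)"
proof (cases "\<exists>x\<in>U i. ip a x")
  case True
  then obtain x0 where x0: "x0 \<in> U i" "ip a x0" by blast
  have "2 * card {x\<in>U i. ip a x} = 2^(u i)"
    using half[OF finite_U U_add x0] card_U[OF i] by simp
  also have "\<dots> = 2 * 2^(u i - 1)" using ubd[OF i]
    by (metis Suc_diff_1 less_le_trans numeral_2_eq_2 power_Suc zero_less_numeral pos2 le_trans zero_less_one_class.zero_le_one)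
  finally show ?thesis using True by simp
next
  case False
  hence e: "{x\<in>U i. ip a x} = {}" by auto
  show ?thesis unfolding e using False by simp
qed

end


lemma map2_neq_map: "map2 (\<noteq>) (map f l) (map h l) = map (\<lambda>x. f x \<noteq> h x) l"
  by (induct l) auto

lemma len_filter_rep: "length (filter P (replicate m x)) = (if P x then m else 0)"
  by (induct m) auto

lemma bin_add_self: "bin_add l l = Defs.zero_vec (length l)"
  by (induct l) (auto simp: bin_add_def Defs.zero_vec_def)

lemma map_ip0: "map (\<lambda>x. False) l = replicate (length l) False"
  by (induct l) auto

lemma pow_sum_lt: "finite E \<Longrightarrow> E \<subseteq> {..<m} \<Longrightarrow> (\<Sum>e\<in>E. (2::nat)^e) < 2^m"
  using sum_mono2[of "{..<m}" E "\<lambda>e. (2::nat)^e"] sum_pow2_lt[of m] by simp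

context constr begin

lemma finite_Vs: "finite Vs" unfolding Vs_def using finite_V by simp

lemma xs_prop: "set xs = Vs \<and> distinct xs"
  unfolding xs_def by (rule someI_ex) (use finite_distinct_list finite_Vs in auto)

lemma len_cols: "length cols = (\<Sum>x\<in>Vs. s - cnt x)"
proof -
  have "length cols = sum_list (map (\<lambda>x. s - cnt x) xs)"
    unfolding cols_def by (simp add: length_concat o_def)
  also have "\<dots> = (\<Sum>x\<in>Vs. s - cnt x)" using xs_prop sum_list_distinct_conv_sum_set by metis
  finally show ?thesis .
qed

lemma hw_map: "hweight (map P cols) = (\<Sum>x\<in>Vs. if P x then s - cnt x else 0)"
proof -
  have "hweight (map P cols) = length (filter P cols)"
    unfolding hweight_def by (simp add: filter_map o_def)
  also have "\<dots> = sum_list (map (\<lambda>x. if P x then s - cnt x else 0) xs)"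
    unfolding cols_def by (simp add: filter_concat length_concat o_def len_filter_rep)
  also have "\<dots> = (\<Sum>x\<in>Vs. if P x then s - cnt x else 0)" using xs_prop sum_list_distinct_conv_sum_set by metis
  finally show ?thesis .
qed

lemma count_formula:
  assumes P0: "\<not> P 0"
  shows "(\<Sum>x\<in>Vs. if P x then s - cnt x else 0) + (\<Sum>i\<in>{1..p}. card {x\<in>U i. P x}) = s * card {x\<in>V. P x}"
proof -
  define VP where "VP = {x\<in>V. P x}"
  have finVP: "finite VP" unfolding VP_def using finite_V by simp
  have "{x\<in>Vs. P x} = VP" unfolding VP_def Vs_def using P0 by auto
  hence e1: "(\<Sum>x\<in>Vs. if P x then s - cnt x else 0) = (\<Sum>x\<in>VP. s - cnt x)"
    using sum.inter_filter[OF finite_Vs, of "\<lambda>x. s - cnt x" P] by simp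
  have cnt_sum: "cnt x = (\<Sum>i\<in>{1..p}. if x \<in> U i then 1 else 0)" for x
    unfolding cnt_def using sum.inter_filter[of "{1..p}" "\<lambda>_. 1::nat" "\<lambda>i. x \<in> U i"] by simp
  have "(\<Sum>x\<in>VP. cnt x) = (\<Sum>x\<in>VP. \<Sum>i\<in>{1..p}. if x \<in> U i then 1 else 0)"
    using cnt_sum by simp
  also have "\<dots> = (\<Sum>i\<in>{1..p}. \<Sum>x\<in>VP. if x \<in> U i then 1 else 0)" by (rule sum.swap)
  also have "\<dots> = (\<Sum>i\<in>{1..p}. card {x\<in>U i. P x})"
  proof (rule sum.cong[OF refl])
    fix i assume i: "i \<in> {1..p}"
    have "(\<Sum>x\<in>VP. if x \<in> U i then 1 else 0) = card {x\<in>VP. x \<in> U i}"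
      using sum.inter_filter[OF finVP, of "\<lambda>_. 1::nat" "\<lambda>x. x \<in> U i"] by simp
    also have "{x\<in>VP. x \<in> U i} = {x\<in>U i. P x}" unfolding VP_def using U_sub[OF i] by auto
    finally show "(\<Sum>x\<in>VP. if x \<in> U i then 1 else 0) = card {x\<in>U i. P x}" .
  qed
  finally have e2: "(\<Sum>x\<in>VP. cnt x) = (\<Sum>i\<in>{1..p}. card {x\<in>U i. P x})" .
  have "(\<Sum>x\<in>VP. s - cnt x) + (\<Sum>x\<in>VP. cnt x) = (\<Sum>x\<in>VP. s - cnt x + cnt x)"
    by (simp add: sum.distrib)
  also have "\<dots> = (\<Sum>x\<in>VP. s)"
  proof (rule sum.cong[OF refl])
    fix x assume "x \<in> VP" hence "cnt x \<le> s" using cnt_le P0 unfolding VP_def by (metis (mono_tags) mem_Collect_eq)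
    thus "s - cnt x + cnt x = s" by simp
  qed
  finally show ?thesis using e1 e2 VP_def by simp
qed

lemma wt_formula: assumes a: "a \<in> V" "a \<noteq> 0"
  shows "hweight (cw a) + (\<Sum>i\<in>{1..p}. if \<exists>x\<in>U i. ip a x then 2^(u i - 1) else 0) = s * 2^(k-1)"
proof -
  have "(\<Sum>i\<in>{1..p}. if \<exists>x\<in>U i. ip a x then 2^(u i - 1) else 0) = (\<Sum>i\<in>{1..p}. card {x\<in>U i. ip a x})"
    using card_ipU by (intro sum.cong) auto
  thus ?thesis using count_formula[of "ip a"] hw_map[of "ip a"] card_ipV[OF a] unfolding cw_def by simp
qed

lemma len_formula: "length cols + (\<Sum>i\<in>{1..p}. 2^(u i) - 1) = s * (2^k - 1)"
proof -
  have "(\<Sum>i\<in>{1..p}. 2^(u i) - 1) = (\<Sum>i\<in>{1..p}. card {x\<in>U i. x \<noteq> 0})"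
  proof (rule sum.cong[OF refl])
    fix i assume i: "i \<in> {1..p}"
    have "{x\<in>U i. x \<noteq> 0} = U i - {0}" by auto
    thus "2^(u i) - 1 = card {x\<in>U i. x \<noteq> 0}" using card_U[OF i] U_zero[OF i] finite_U by (simp add: card_Diff_singleton)
  qed
  moreover have "card {x\<in>V. x \<noteq> 0} = 2^k - 1"
  proof -
    have "{x\<in>V. x \<noteq> 0} = V - {0}" by auto
    thus ?thesis using card_V V_zero finite_V by (simp add: card_Diff_singleton)
  qed
  moreover have "length cols = (\<Sum>x\<in>Vs. if x \<noteq> 0 then s - cnt x else 0)"
    unfolding len_cols Vs_def by (intro sum.cong) auto
  ultimately show ?thesis using count_formula[of "\<lambda>x. x \<noteq> 0"] by simp
qed

definition top where "top = monom (1::gf) (k-1)"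

lemma top_V: "top \<in> V" "top \<noteq> 0" unfolding top_def using monom_V[of "k-1"] k4 by auto

lemma top_hits: assumes i: "i \<in> {1..p}" shows "\<exists>x\<in>U i. ip top x"
proof -
  define x where "x = monom 1 (u i - 1) * g i"
  have "x \<in> U i" unfolding U_def x_def using ubd[OF i] by (auto simp: degree_monom_eq)
  moreover have "ip top x"
  proof -
    have "coeff x (k-1) = coeff (g i) (k - 1 - (u i - 1))"
    proof -
      have "u i - 1 \<le> k - 1" using ubd[OF i] by arith
      thus ?thesis unfolding x_def by (simp add: coeff_monom_mult)
    qed
    also have "k - 1 - (u i - 1) = degree (g i)" using gdeg[OF i] ubd[OF i] by simp
    finally have "coeff x (k-1) \<noteq> 0" using g_nz[OF i] by simp
    thus ?thesis unfolding ip_def top_def using sum_coeff_monom[where k=k and m="k-1" and x=x] k4 by simp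
  qed
  ultimately show ?thesis by blast
qed

lemma wt_top: "hweight (cw top) + (\<Sum>i\<in>{1..p}. 2^(u i - 1)) = s * 2^(k-1)"
proof -
  have "(\<Sum>i\<in>{1..p}. if \<exists>x\<in>U i. ip top x then 2^(u i - 1) else 0) = (\<Sum>i\<in>{1..p}. (2::nat)^(u i - 1))"
    by (rule sum.cong[OF refl]) (use top_hits in auto)
  thus ?thesis using wt_formula[OF top_V] by simp
qed

lemma wt_ge: assumes "a \<in> V" "a \<noteq> 0" shows "hweight (cw top) \<le> hweight (cw a)"
proof -
  have "(\<Sum>i\<in>{1..p}. if \<exists>x\<in>U i. ip a x then 2^(u i - 1) else 0) \<le> (\<Sum>i\<in>{1..p}. (2::nat)^(u i - 1))"
    by (intro sum_mono) auto
  thus ?thesis using wt_formula[OF assms] wt_top by linarith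
qed

lemma D_lt: "(\<Sum>i\<in>{1..p}. (2::nat)^(u i - 1)) < 2^(k-1)"
proof -
  have inj: "inj_on (\<lambda>i. u i - 1) {1..p}"
  proof (rule inj_onI)
    fix i j assume "i \<in> {1..p}" "j \<in> {1..p}" "u i - 1 = u j - 1"
    moreover hence "u i = u j" using ubd[of i] ubd[of j] by arith
    ultimately show "i = j" using u_inj by (meson inj_onD)
  qed
  have "(\<Sum>i\<in>{1..p}. (2::nat)^(u i - 1)) = (\<Sum>e\<in>(\<lambda>i. u i - 1) ` {1..p}. 2^e)"
    using sum.reindex[OF inj, of "\<lambda>e. (2::nat)^e"] by simp
  also have "\<dots> < 2^(k-1)"
  proof (rule pow_sum_lt)
    show "(\<lambda>i. u i - 1) ` {1..p} \<subseteq> {..<k-1}"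
    proof
      fix e assume "e \<in> (\<lambda>i. u i - 1) ` {1..p}"
      then obtain i where "i \<in> {1..p}" "e = u i - 1" by auto
      thus "e \<in> {..<k-1}" using ubd[of i] by auto
    qed
  qed simp
  finally show ?thesis .
qed

lemma wt_top_pos: "hweight (cw top) > 0"
proof -
  have "2^(k-1) \<le> s * (2::nat)^(k-1)" using s1 by simp
  thus ?thesis using wt_top D_lt by linarith
qed

lemma cw_add: "bin_add (cw a) (cw b) = cw (a + b)"
  unfolding bin_add_def cw_def map2_neq_map ip_add_left ..

lemma len_cw[simp]: "length (cw a) = length cols" unfolding cw_def by simp

lemma cw_zero: "cw 0 = Defs.zero_vec (length cols)"
proof -
  have "ip 0 = (\<lambda>x. False)" by (rule ext) simp
  thus ?thesis unfolding cw_def Defs.zero_vec_def using map_ip0 by simp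
qed

lemma hweight_zero: "hweight (Defs.zero_vec n) = 0" unfolding hweight_def Defs.zero_vec_def by simp

lemma cw_eq0: assumes "a \<in> V" shows "cw a = Defs.zero_vec (length cols) \<longleftrightarrow> a = 0"
proof
  assume h: "cw a = Defs.zero_vec (length cols)"
  show "a = 0"
  proof (rule ccontr)
    assume "a \<noteq> 0"
    hence "hweight (cw a) > 0" using wt_ge[OF assms] wt_top_pos by linarith
    thus False using h hweight_zero by simp
  qed
qed (simp add: cw_zero)

lemma cw_inj: "inj_on cw V"
proof (rule inj_onI)
  fix a b assume ab: "a \<in> V" "b \<in> V" "cw a = cw b"
  have "cw (a + b) = bin_add (cw a) (cw a)" using ab cw_add by metis
  also have "\<dots> = Defs.zero_vec (length cols)" using bin_add_self[of "cw a"] by simp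
  finally have "a + b = 0" using cw_eq0 V_add ab by blast
  have "a = a + b + b" by (simp add: add.assoc gfp_add_self)
  thus "a = b" using \<open>a + b = 0\<close> by simp
qed

lemma wt4: assumes "a \<in> V" shows "4 dvd hweight (cw a)"
proof (cases "a = 0")
  case True thus ?thesis using cw_zero hweight_zero by simp
next
  case False
  have "(4::nat) dvd 2^(k-1)" using k4 le_imp_power_dvd[of 2 "k-1" "2::nat"] by simp
  hence S: "(4::nat) dvd s * 2^(k-1)" by simp
  have "(4::nat) dvd (\<Sum>i\<in>{1..p}. if \<exists>x\<in>U i. ip a x then 2^(u i - 1) else 0)"
  proof (rule dvd_sum)
    fix i assume "i \<in> {1..p}"
    hence "2 \<le> u i - 1" using ubd[of i] by arith
    hence "(4::nat) dvd 2^(u i - 1)" using le_imp_power_dvd[of 2 "u i - 1" "2::nat"] by simp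
    thus "(4::nat) dvd (if \<exists>x\<in>U i. ip a x then 2^(u i - 1) else 0)" by simp
  qed
  note T = this
  have "(4::nat) dvd hweight (cw a) + (\<Sum>i\<in>{1..p}. if \<exists>x\<in>U i. ip a x then 2^(u i - 1) else 0)"
    unfolding wt_formula[OF assms False] by (rule S)
  thus ?thesis using dvd_add_left_iff[OF T] by blast
qed

end


lemma sum_pow2: "(\<Sum>i<n. (2::nat)^i) = 2^n - 1"
  by (induct n) auto

lemma sum_pow2_rev: "(\<Sum>i<n. (2::nat)^(n - Suc i)) = 2^n - 1"
  using sum.nat_diff_reindex[of "\<lambda>i. (2::nat)^i" n] sum_pow2[of n] by simp

lemma pow_sum_lt': "finite E \<Longrightarrow> E \<subseteq> {..<m} \<Longrightarrow> (\<Sum>e\<in>E. (2::nat)^e) < 2^m"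
proof -
  assume "finite E" "E \<subseteq> {..<m}"
  hence "(\<Sum>e\<in>E. (2::nat)^e) \<le> (\<Sum>e<m. (2::nat)^e)" by (intro sum_mono2) auto
  also have "\<dots> < 2^m" by (induct m) auto
  finally show ?thesis .
qed

lemma div_pow_sum:
  assumes fin: "finite E"
  shows "(\<Sum>e\<in>E. (2::nat)^e) div 2^i = (\<Sum>e\<in>E. if i \<le> e then 2^(e-i) else 0)"
proof -
  define H where "H = (\<Sum>e\<in>E. if i \<le> e then (2::nat)^(e-i) else 0)"
  define L where "L = (\<Sum>e\<in>{e\<in>E. e < i}. (2::nat)^e)"
  have "(\<Sum>e\<in>E. (2::nat)^e) = (\<Sum>e\<in>E. (if i \<le> e then 2^i * 2^(e-i) else 0) + (if e < i then 2^e else 0))"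
    by (rule sum.cong[OF refl]) (auto simp: power_add[symmetric])
  also have "\<dots> = 2^i * H + L"
    unfolding H_def L_def sum.distrib sum_distrib_left using fin
    by (simp add: sum.inter_filter if_distrib[of "\<lambda>x. 2^i * x"] cong: if_cong)
  finally have eq: "(\<Sum>e\<in>E. (2::nat)^e) = 2^i * H + L" .
  have "L < 2^i" unfolding L_def by (rule pow_sum_lt') (use fin in auto)
  thus ?thesis unfolding eq H_def[symmetric] by simp
qed

lemma inner_sum:
  assumes "e < k"
  shows "(\<Sum>i<k. if i \<le> e then (2::nat)^(e-i) else 0) = 2^(e+1) - 1"
proof -
  have h: "(\<Sum>i\<in>{i\<in>{..<k}. i \<le> e}. (2::nat)^(e-i)) = (\<Sum>i<k. if i \<le> e then (2::nat)^(e-i) else 0)"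
    by (rule sum.inter_filter) simp
  have "(\<Sum>i<k. if i \<le> e then (2::nat)^(e-i) else 0) = (\<Sum>i\<in>{i\<in>{..<k}. i \<le> e}. (2::nat)^(e-i))"
    using h by simp
  also have "{i\<in>{..<k}. i \<le> e} = {..<e+1}" using assms by auto
  also have "(\<Sum>i<e+1. (2::nat)^(e-i)) = (\<Sum>i<e+1. 2^(e + 1 - Suc i))" by simp
  also have "\<dots> = 2^(e+1) - 1" by (rule sum_pow2_rev)
  finally show ?thesis .
qed

lemma ceil_lemma:
  fixes d D S i :: nat
  assumes "d + D = S * 2^i"
  shows "\<lceil>real d / 2^i\<rceil> = int S - int (D div 2^i)"
proof -
  define q where "q = D div 2^i"
  define r where "r = D mod 2^i"
  have D: "D = q * 2^i + r" unfolding q_def r_def using div_mult_mod_eq[of D "2^i"] by simp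
  have r: "r < 2^i" unfolding r_def by simp
  have e: "d + q * 2^i + r = S * 2^i" using assms D by linarith
  have e2: "real d + real q * 2^i + real r = real S * 2^i"
    using arg_cong[OF e, of real] by (simp only: of_nat_add of_nat_mult of_nat_power of_nat_numeral)
  have pos: "(2::real)^i > 0" by simp
  have e3: "real d = (real S - real q) * 2^i - real r" using e2 by (simp only: left_diff_distrib)
  have x: "real d / 2^i = (real S - real q) - real r / 2^i"
    unfolding e3 diff_divide_distrib using pos by simp
  have "real r < real ((2::nat)^i)" using r by (simp only: of_nat_less_iff)
  hence "real r < 2^i" by (simp only: of_nat_power of_nat_numeral)
  hence r1: "real r / 2^i < 1" using pos by (simp only: divide_less_eq_1_pos)
  have r0: "real r / 2^i \<ge> 0" by simp
  have "\<lceil>(real S - real q) - real r / 2^i\<rceil> = int S - int q"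
    by (rule ceiling_unique) (use r1 r0 in auto)
  thus ?thesis unfolding q_def[symmetric] x .
qed

lemma griesmer_arith:
  fixes n k d s :: nat and E :: "nat set"
  assumes fin: "finite E" and Ek: "E \<subseteq> {..<k}" and k: "k \<ge> 1"
    and dd: "d + (\<Sum>e\<in>E. 2^e) = s * 2^(k-1)"
    and nn: "n + (\<Sum>e\<in>E. 2^(e+1) - 1) = s * (2^k - 1)"
  shows "int n = (\<Sum>i<k. \<lceil>real d / 2^i\<rceil>)"
proof -
  define D where "D = (\<Sum>e\<in>E. (2::nat)^e)"
  have c: "\<lceil>real d / 2^i\<rceil> = int (s * 2^(k - Suc i)) - int (D div 2^i)" if i: "i < k" for i
  proof -
    have "s * 2^(k-1) = (s * 2^(k - Suc i)) * 2^i"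
      using i by (simp add: power_add[symmetric] mult.assoc)
    thus ?thesis using ceil_lemma[of d D "s * 2^(k - Suc i)" i] dd D_def by simp
  qed
  have "(\<Sum>i<k. \<lceil>real d / 2^i\<rceil>) = (\<Sum>i<k. int (s * 2^(k - Suc i))) - (\<Sum>i<k. int (D div 2^i))"
    using c by (simp add: sum_subtractf)
  also have "(\<Sum>i<k. int (s * 2^(k - Suc i))) = int (s * (2^k - 1))"
  proof -
    have sp: "(\<Sum>i<k. s * 2^(k - Suc i)) = s * (2^k - 1)"
      by (simp only: sum_distrib_left[symmetric] sum_pow2_rev)
    show ?thesis by (simp only: sp[symmetric] of_nat_sum)
  qed
  also have "(\<Sum>i<k. int (D div 2^i)) = int (\<Sum>i<k. D div 2^i)" by (simp only: of_nat_sum)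
  finally have F: "(\<Sum>i<k. \<lceil>real d / 2^i\<rceil>) = int (s * (2^k - 1)) - int (\<Sum>i<k. D div 2^i)" .
  have "(\<Sum>i<k. D div 2^i) = (\<Sum>i<k. \<Sum>e\<in>E. if i \<le> e then 2^(e-i) else 0)"
    unfolding D_def using div_pow_sum[OF fin] by simp
  also have "\<dots> = (\<Sum>e\<in>E. \<Sum>i<k. if i \<le> e then 2^(e-i) else 0)" by (rule sum.swap)
  also have "\<dots> = (\<Sum>e\<in>E. 2^(e+1) - 1)"
    using Ek inner_sum by (intro sum.cong) auto
  finally have "(\<Sum>i<k. \<lceil>real d / 2^i\<rceil>) = int (s * (2^k - 1)) - int (\<Sum>e\<in>E. 2^(e+1) - 1)"
    using F by simp
  thus ?thesis using nn by linarith
qed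

lemma hw_card: "hweight v = card {i. i < length v \<and> v!i}"
  unfolding hweight_def by (simp add: length_filter_conv_card)

lemma inner_formula:
  assumes "length x = n" "length y = n"
  shows "hweight (bin_add x y) + 2 * card {i. i < n \<and> x!i \<and> y!i} = hweight x + hweight y"
proof -
  define A where "A = {i. i < n \<and> x!i}"
  define B where "B = {i. i < n \<and> y!i}"
  have finA: "finite A" "finite B" unfolding A_def B_def by auto
  have "{i. i < length (bin_add x y) \<and> bin_add x y ! i} = {i. i < n \<and> (x!i \<noteq> y!i)}"
    using assms by (auto simp: bin_add_def)
  hence "hweight (bin_add x y) = card {i. i < n \<and> (x!i \<noteq> y!i)}"
    unfolding hw_card by simp
  also have "{i. i < n \<and> (x!i \<noteq> y!i)} = (A - B) \<union> (B - A)" unfolding A_def B_def by auto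
  also have "card \<dots> = card (A - B) + card (B - A)"
    by (rule card_Un_disjoint[OF finite_Diff[OF finA(1)] finite_Diff[OF finA(2)]]) blast
  finally have 1: "hweight (bin_add x y) = card (A - B) + card (B - A)" .
  have 2: "{i. i < n \<and> x!i \<and> y!i} = A \<inter> B" unfolding A_def B_def by auto
  have 3: "card A = card (A - B) + card (A \<inter> B)"
  proof -
    have "card A = card ((A - B) \<union> (A \<inter> B))" by (simp only: Un_Diff_Int)
    also have "\<dots> = card (A - B) + card (A \<inter> B)"
      by (rule card_Un_disjoint[OF finite_Diff[OF finA(1)] finite_Int[OF disjI1[OF finA(1)]]]) blast
    finally show ?thesis .
  qed
  have 4: "card B = card (B - A) + card (A \<inter> B)"
  proof -
    have "card B = card ((B - A) \<union> (B \<inter> A))" by (simp only: Un_Diff_Int)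
    also have "\<dots> = card (B - A) + card (B \<inter> A)"
      by (rule card_Un_disjoint[OF finite_Diff[OF finA(2)] finite_Int[OF disjI1[OF finA(2)]]]) blast
    also have "B \<inter> A = A \<inter> B" by (rule Int_commute)
    finally show ?thesis .
  qed
  have "hweight x = card A" "hweight y = card B" unfolding hw_card A_def B_def using assms by simp_all
  thus ?thesis unfolding 2 using 1 3 4 by linarith
qed


context constr begin

lemma inj_um1: "inj_on (\<lambda>i. u i - 1) {1..p}"
proof (rule inj_onI)
  fix i j assume "i \<in> {1..p}" "j \<in> {1..p}" "u i - 1 = u j - 1"
  moreover hence "u i = u j" using ubd[of i] ubd[of j] by arith
  ultimately show "i = j" using u_inj by (meson inj_onD)
qed

end

theorem corollary4p4:
  fixes k s p :: nat and u :: "nat \<Rightarrow> nat"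
  assumes "k \<ge> 4" and "s \<ge> 1"
    and "\<forall>i\<in>{1..p}. 3 \<le> u i \<and> u i < k"
    and "\<forall>i\<in>{1..<p}. u i > u (i + 1)"
    and "(\<Sum>i = 1..min (s + 1) p. u i) \<le> s * k"
  shows "\<exists>C n d. bin_code_params C n k d \<and> self_orthogonal n C \<and> griesmer_params n k d
           \<and> int n = int s * (2 ^ k - 1) - (\<Sum>i = 1..p. 2 ^ u i - 1)
           \<and> int d = int s * 2 ^ (k - 1) - (\<Sum>i = 1..p. 2 ^ (u i - 1))"
proof -
  have "\<forall>i\<in>{1..p}. \<exists>g::gf poly. irreducible g \<and> degree g = k - u i"
  proof
    fix i assume i: "i \<in> {1..p}"
    have "u i < k" using assms(3) i by blast
    hence "k - u i \<ge> 1" by simp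
    thus "\<exists>g::gf poly. irreducible g \<and> degree g = k - u i" by (rule exists_irr)
  qed
  from bchoice[OF this] obtain g :: "nat \<Rightarrow> gf poly" where g: "\<forall>i\<in>{1..p}. irreducible (g i) \<and> degree (g i) = k - u i" by blast
  interpret constr k s p u g
  proof (unfold_locales)
    show "4 \<le> k" by (rule assms(1))
    show "1 \<le> s" by (rule assms(2))
    show "\<And>i. i \<in> {1..p} \<Longrightarrow> 3 \<le> u i \<and> u i < k" using assms(3) by blast
    show "\<And>i. i \<in> {1..<p} \<Longrightarrow> u (i + 1) < u i" using assms(4) by blast
    show "(\<Sum>i = 1..min (s + 1) p. u i) \<le> s * k" by (rule assms(5))
    show "\<And>i. i \<in> {1..p} \<Longrightarrow> irreducible (g i)" using g by blast
    show "\<And>i. i \<in> {1..p} \<Longrightarrow> degree (g i) = k - u i" using g by blast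
  qed
  define n where "n = length cols"
  define C where "C = cw ` V"
  define d where "d = hweight (cw top)"
  have lin: "bin_linear_code n C"
    unfolding bin_linear_code_def
  proof (intro conjI ballI)
    show "C \<subseteq> {v. length v = n}" unfolding C_def n_def by auto
    show "Defs.zero_vec n \<in> C" unfolding C_def n_def using cw_zero V_zero by (metis image_eqI)
  next
    fix x y assume "x \<in> C" "y \<in> C"
    then obtain a b where "a \<in> V" "b \<in> V" "x = cw a" "y = cw b" unfolding C_def by auto
    thus "bin_add x y \<in> C" unfolding C_def using cw_add V_add by (metis image_eqI)
  qed
  have dim: "code_dim C k"
    unfolding code_dim_def C_def using card_image[OF cw_inj] card_V by simp
  have md: "min_dist n C = d"
    unfolding min_dist_def
  proof (rule Min_eqI)
    have "{hweight c |c. c \<in> C \<and> c \<noteq> Defs.zero_vec n} \<subseteq> hweight ` C" by auto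
    moreover have "finite C" unfolding C_def using finite_V by simp
    ultimately show "finite {hweight c |c. c \<in> C \<and> c \<noteq> Defs.zero_vec n}" by (meson finite_imageI finite_subset)
  next
    fix y assume "y \<in> {hweight c |c. c \<in> C \<and> c \<noteq> Defs.zero_vec n}"
    then obtain a where a: "a \<in> V" "cw a \<noteq> Defs.zero_vec n" "y = hweight (cw a)" unfolding C_def by auto
    have "a \<noteq> 0" using a cw_zero n_def by auto
    thus "d \<le> y" unfolding d_def a(3) using wt_ge[OF a(1)] by simp
  next
    have "cw top \<noteq> Defs.zero_vec n" using cw_eq0[OF top_V(1)] top_V(2) n_def by simp
    thus "d \<in> {hweight c |c. c \<in> C \<and> c \<noteq> Defs.zero_vec n}" unfolding d_def C_def using top_V(1) by blast
  qed
  have so: "self_orthogonal n C"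
    unfolding self_orthogonal_def dual_code_def
  proof
    fix x assume "x \<in> C"
    then obtain a where a: "a \<in> V" "x = cw a" unfolding C_def by auto
    have "\<not> bin_inner n x y" if "y \<in> C" for y
    proof -
      obtain b where b: "b \<in> V" "y = cw b" using \<open>y \<in> C\<close> unfolding C_def by auto
      define X where "X = card {i. i < n \<and> x!i \<and> y!i}"
      have "hweight (bin_add x y) + 2 * X = hweight x + hweight y"
        unfolding X_def by (rule inner_formula) (simp_all add: a b n_def)
      hence eq: "hweight (cw (a + b)) + 2 * X = hweight (cw a) + hweight (cw b)"
        using a b cw_add by simp
      have "4 dvd hweight (cw (a + b))" using wt4 V_add a b by blast
      moreover have "4 dvd hweight (cw a)" "4 dvd hweight (cw b)" using wt4 a b by blast+
      ultimately have "4 dvd 2 * X" using eq by (metis dvd_add dvd_add_right_iff)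
      hence "even X" by presburger
      thus ?thesis unfolding bin_inner_def X_def by simp
    qed
    moreover have "length x = n" using a n_def by simp
    ultimately show "x \<in> {v. length v = n \<and> (\<forall>c\<in>C. \<not> bin_inner n v c)}" by blast
  qed
  define E where "E = (\<lambda>i. u i - 1) ` {1..p}"
  have sumE: "(\<Sum>e\<in>E. f e) = (\<Sum>i=1..p. f (u i - 1))" for f :: "nat \<Rightarrow> nat"
    unfolding E_def using sum.reindex[OF inj_um1, of f] by simp
  have dnat: "d + (\<Sum>i=1..p. 2^(u i - 1)) = s * 2^(k-1)" unfolding d_def using wt_top by simp
  have nnat: "n + (\<Sum>i=1..p. 2^(u i) - 1) = s * (2^k - 1)" unfolding n_def using len_formula by simp
  have gp: "griesmer_params n k d"
    unfolding griesmer_params_def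
  proof (rule griesmer_arith)
    show "finite E" unfolding E_def by simp
    show "E \<subseteq> {..<k}" unfolding E_def using ubd by fastforce
    show "1 \<le> k" using assms(1) by simp
    show "d + (\<Sum>e\<in>E. 2^e) = s * 2^(k-1)" using dnat sumE by simp
    have "(\<Sum>e\<in>E. (2::nat)^(e+1) - 1) = (\<Sum>i=1..p. (2::nat)^(u i - 1 + 1) - 1)"
      using sumE[of "\<lambda>e. 2^(e+1) - 1"] by simp
    also have "\<dots> = (\<Sum>i=1..p. 2^(u i) - 1)"
    proof (rule sum.cong[OF refl])
      fix i assume "i \<in> {1..p}"
      hence "u i - 1 + 1 = u i" using ubd[of i] by arith
      thus "2^(u i - 1 + 1) - 1 = 2^(u i) - (1::nat)" by simp
    qed
    finally show "n + (\<Sum>e\<in>E. 2^(e+1) - 1) = s * (2^k - 1)" using nnat by simp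
  qed
  have nint: "int n = int s * (2 ^ k - 1) - (\<Sum>i = 1..p. 2 ^ u i - 1)"
  proof -
    have e1: "int (\<Sum>i=1..p. 2^(u i) - 1) = (\<Sum>i=1..p. (2::int)^(u i) - 1)"
      by (simp add: of_nat_sum of_nat_diff)
    have e2: "int (s * (2^k - 1)) = int s * (2^k - 1)" by (simp add: of_nat_diff)
    have "int n + int (\<Sum>i=1..p. 2^(u i) - 1) = int (s * (2^k - 1))" using nnat by (metis of_nat_add)
    thus ?thesis using e1 e2 by simp
  qed
  have dint: "int d = int s * 2 ^ (k - 1) - (\<Sum>i = 1..p. 2 ^ (u i - 1))"
  proof -
    have "int d + int (\<Sum>i=1..p. 2^(u i - 1)) = int (s * 2^(k-1))" using dnat by (metis of_nat_add)
    thus ?thesis by (simp add: of_nat_sum)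
  qed
  show ?thesis
    using lin dim md so gp nint dint unfolding bin_code_params_def by blast
qed


end
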